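(* Let $\mathfrak s=\mathfrak{sl}(2,\mathbb C)$ with $h,e$ and Cartan involution $\theta$ such that $[e,-\theta e]=h$, $\theta h=-h$. Put $y=e-\theta e$, $t=i(e+\theta e)$, $Z=h+iy$, $\overline Z=h-iy$, $\mathfrak a=\mathbb Ch$, $\mathfrak k=\mathbb Ct$, $\mathfrak n=\mathbb Ce$, and let $Q:U(\mathfrak s)=U(\mathfrak a)U(\mathfrak k)\oplus\mathfrak nU(\mathfrak s)\to U(\mathfrak a)U(\mathfrak k)$ be the projection onto the first summand, where $U(\mathfrak a)U(\mathfrak k)$ is identified with the polynomial algebra $\mathbb C[h,t]$ via $h^at^b\mapsto h^at^b$. Then for every integer $l\ge1$ (powers taken in $U(\mathfrak s)$) $$Q(Z^l)=\prod_{j=0}^{l-1}(h+2j-t),\qquad Q(\overline Z^{\,l})=\prod_{j=0}^{l-1}(h+2j+t).$$ *)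

theory Defs
  imports Complex_Main "HOL-Library.Poly_Mapping" "HOL-Computational_Algebra.Polynomial"
begin

datatype gen = GH | GE | GF

text \<open>Words in the generators, forming a monoid under concatenation (written +).\<close>
datatype fword = FW "gen list"

instantiation fword :: monoid_add
begin
definition zero_fword :: fword where "zero_fword = FW []"
fun plus_fword :: "fword \<Rightarrow> fword \<Rightarrow> fword" where
  "plus_fword (FW a) (FW b) = FW (a @ b)"
instance
proof
  fix a b c :: fword
  show "a + b + c = a + (b + c)" by (cases a; cases b; cases c) simp
  show "0 + a = a" by (cases a) (simp add: zero_fword_def)
  show "a + 0 = a" by (cases a) (simp add: zero_fword_def)
qed
end

text \<open>The free associative complex algebra on h, e, f (finitely supported
  coefficient functions on words, with convolution product).\<close>
type_synonym FA = "fword \<Rightarrow>\<^sub>0 complex"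

definition sc :: "complex \<Rightarrow> FA" where "sc c = Poly_Mapping.single 0 c"
definition gen :: "gen \<Rightarrow> FA" where "gen g = Poly_Mapping.single (FW [g]) 1"

fun brk :: "gen \<Rightarrow> gen \<Rightarrow> FA" where
  "brk GH GE = 2 * gen GE"
| "brk GE GH = - (2 * gen GE)"
| "brk GH GF = - (2 * gen GF)"
| "brk GF GH = 2 * gen GF"
| "brk GE GF = gen GH"
| "brk GF GE = - gen GH"
| "brk _ _ = 0"

text \<open>Two-sided ideal generated by x y - y x - [x,y]; U(s) = FA / rel_ideal.\<close>
inductive_set rel_ideal :: "FA set" where
  rel: "gen x * gen y - gen y * gen x - brk x y \<in> rel_ideal"
| zero: "0 \<in> rel_ideal"
| add: "a \<in> rel_ideal \<Longrightarrow> b \<in> rel_ideal \<Longrightarrow> a + b \<in> rel_ideal"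
| mult: "a \<in> rel_ideal \<Longrightarrow> u * a * v \<in> rel_ideal"

text \<open>Cartan involution theta X = -X^T on the basis: theta h = -h, theta e = -f,
  theta f = -e.  Then [e, -theta e] = [e,f] = h.\<close>
fun theta :: "gen \<Rightarrow> FA" where
  "theta GH = - gen GH"
| "theta GE = - gen GF"
| "theta GF = - gen GE"

definition hh :: FA where "hh = gen GH"
definition ee :: FA where "ee = gen GE"
definition yy :: FA where "yy = ee - theta GE"
definition tt :: FA where "tt = sc \<i> * (ee + theta GE)"
definition ZZ :: FA where "ZZ = hh + sc \<i> * yy"
definition Zbar :: FA where "Zbar = hh - sc \<i> * yy"

text \<open>Preimage in FA of n U(s) = e U(s).\<close>
definition nU :: "FA set" where "nU = {ee * u + r | u r. r \<in> rel_ideal}"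

text \<open>C[h,t] represented as (C[h])[t]: outer variable t, inner variable h.
  ord sends h^a t^b to the ordered product h^a t^b in U(s).\<close>
definition ord_map :: "complex poly poly \<Rightarrow> FA" where
  "ord_map p = (\<Sum>b\<le>degree p. \<Sum>a\<le>degree (coeff p b).
      sc (coeff (coeff p b) a) * hh ^ a * tt ^ b)"

text \<open>Projection Q onto U(a)U(k) along n U(s), identified with C[h,t]
  (well defined on U(s) since rel_ideal \<subseteq> nU).\<close>
definition Q :: "FA \<Rightarrow> complex poly poly" where
  "Q z = (THE p. z - ord_map p \<in> nU)"

end

theory Submission
  imports Defs
begin


lemma pm_induct[case_names zero add]:
  fixes x :: "'a \<Rightarrow>\<^sub>0 'b::comm_monoid_add"
  assumes "P 0" and "\<And>k c f. P f \<Longrightarrow> P (Poly_Mapping.single k c + f)"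
  shows "P x"
proof (induction x rule: update_induct)
  case const then show ?case using assms(1) .
next
  case (update f a b)
  have "Poly_Mapping.update a b f = Poly_Mapping.single a b + f"
    using update(1) by (intro poly_mapping_eqI) (auto simp: lookup_update lookup_add lookup_single when_def in_keys_iff)
  then show ?case using assms(2)[OF update(3)] by simp
qed

lemma sc_add: "sc (a + b) = sc a + sc b" by (simp add: sc_def single_add)
lemma sc_mult: "sc (a * b) = sc a * sc b" by (simp add: sc_def mult_single)
lemma sc_1[simp]: "sc 1 = 1" by (simp add: sc_def)
lemma sc_0[simp]: "sc 0 = 0" by (simp add: sc_def)
lemma sc_minus: "sc (- a) = - sc a" by (simp add: sc_def single_uminus)
lemma sc_diff: "sc (a - b) = sc a - sc b" by (simp add: sc_def single_diff)
lemma sc_numeral[simp]: "sc (numeral n) = numeral n" by (simp add: sc_def)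

lemma sc_central: "sc c * x = x * sc c"
proof (induction x rule: pm_induct)
  case zero then show ?case by simp
next
  case (add k d f)
  have "sc c * Poly_Mapping.single k d = Poly_Mapping.single k d * sc c"
    by (simp add: sc_def mult_single mult.commute)
  then show ?case using add by (simp add: distrib_left distrib_right)
qed



type_synonym M = "complex poly poly"

definition Cc :: M where "Cc = [:[:0,1:]:]"
definition Xx :: M where "Xx = [:0,1:]"

fun rho :: "gen \<Rightarrow> M \<Rightarrow> M" where
  "rho GH p = Cc * p + 2 * Xx * pderiv p"
| "rho GE p = Cc * pderiv p + Xx * pderiv (pderiv p)"
| "rho GF p = - (Xx * p)"

lemma rho_add: "rho g (p + q) = rho g p + rho g q"
  by (cases g) (simp_all add: pderiv_add algebra_simps)

lemma rho_smult: "rho g (smult r p) = smult r (rho g p)"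
  by (cases g) (simp_all add: pderiv_smult algebra_simps smult_add_right)

fun Wd :: "fword \<Rightarrow> M \<Rightarrow> M" where
  "Wd (FW l) m = foldl (\<lambda>m g. rho g m) m l"

lemma foldl_rho_add: "foldl (\<lambda>m g. rho g m) (p + q) l = foldl (\<lambda>m g. rho g m) p l + foldl (\<lambda>m g. rho g m) q l"
  by (induction l arbitrary: p q) (simp_all add: rho_add)
lemma foldl_rho_smult: "foldl (\<lambda>m g. rho g m) (smult r p) l = smult r (foldl (\<lambda>m g. rho g m) p l)"
  by (induction l arbitrary: p) (simp_all add: rho_smult)

lemma Wd_add: "Wd w (p + q) = Wd w p + Wd w q"
  by (cases w) (simp add: foldl_rho_add)
lemma Wd_smult: "Wd w (smult r p) = smult r (Wd w p)"
  by (cases w) (simp add: foldl_rho_smult)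
lemma Wd_0: "Wd w 0 = 0"
  using Wd_smult[of w 0 0] by simp
lemma Wd_plus: "Wd (v + w) m = Wd w (Wd v m)"
  by (cases v; cases w) simp
lemma Wd_zero: "Wd 0 m = m"
  by (simp add: zero_fword_def)

lemma smult_c1[simp]: "smult [:1:] (x::M) = x"
  by (subst pCons_one) simp
lemma smult_sum2: "smult r (sum f S) = (\<Sum>i\<in>S. smult r (f i))"
  by (induct S rule: infinite_finite_induct) (auto simp: smult_add_right)
lemma smult_cadd: "smult [:a + b:] x = smult [:a:] x + smult [:b:] x"
proof -
  have "[:a + b:] = [:a:] + [:b:]" by simp
  then show ?thesis by (simp only: smult_add_left)
qed
lemma smult_comm: "smult [:c:] (smult r x) = smult r (smult [:c:] x)"
  by (simp add: mult.commute)

definition Act :: "FA \<Rightarrow> M \<Rightarrow> M" where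
  "Act a m = (\<Sum>k\<in>Poly_Mapping.keys a. smult [:Poly_Mapping.lookup a k:] (Wd k m))"

lemma Act_superset: "finite K \<Longrightarrow> Poly_Mapping.keys a \<subseteq> K \<Longrightarrow> Act a m = (\<Sum>k\<in>K. smult [:Poly_Mapping.lookup a k:] (Wd k m))"
  unfolding Act_def by (rule sum.mono_neutral_left) (auto simp: in_keys_iff)

lemma Act_add: "Act (a + b) m = Act a m + Act b m"
proof -
  let ?K = "Poly_Mapping.keys a \<union> Poly_Mapping.keys b"
  have "Poly_Mapping.keys (a + b) \<subseteq> ?K" by (rule keys_add)
  then show ?thesis
    by (simp add: Act_superset[of ?K] lookup_add sum.distrib smult_cadd)
qed

lemma Act_zero[simp]: "Act 0 m = 0" by (simp add: Act_def)

lemma Act_single: "Act (Poly_Mapping.single k c) m = smult [:c:] (Wd k m)"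
  by (cases "c = 0") (simp_all add: Act_def)

lemma Act_madd: "Act a (p + q) = Act a p + Act a q"
  by (simp add: Act_def Wd_add sum.distrib smult_add_right)
lemma Act_msmult: "Act a (smult r p) = smult r (Act a p)"
  unfolding Act_def Wd_smult smult_sum2 by (rule sum.cong) (simp_all only: smult_comm)
lemma Act_m0: "Act a 0 = 0"
  using Act_msmult[of a 0 0] by simp

lemma Act_mult: "Act (a * b) m = Act b (Act a m)"
proof (induction a arbitrary: m rule: pm_induct)
  case zero then show ?case by (simp add: Act_m0)
next
  case (add k c f)
  have "Act (Poly_Mapping.single k c * b) m = Act b (Act (Poly_Mapping.single k c) m)" for m
  proof (induction b arbitrary: m rule: pm_induct)
    case zero then show ?case by simp
  next
    case (add l d g)
    then show ?case
      by (simp add: distrib_left Act_add mult_single Act_single Wd_plus Wd_smult mult.commute)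
  qed
  then show ?case using add by (simp add: distrib_right Act_add Act_madd)
qed

lemma Act_neg: "Act (- a) m = - Act a m"
  using Act_add[of a "-a" m] by (simp add: add_eq_0_iff)
lemma Act_diff: "Act (a - b) m = Act a m - Act b m"
  using Act_add[of a "-b" m] by (simp add: Act_neg)
lemma Act_gen: "Act (gen g) m = rho g m"
  by (simp add: gen_def Act_single)
lemma Act_sc: "Act (sc c) m = smult [:c:] m"
  by (simp add: sc_def Act_single Wd_zero)
lemma Act_one: "Act 1 m = m"
  using Act_sc[of 1 m] by simp
lemma Act_numeral: "Act (numeral n) m = smult [:numeral n:] m"
  using Act_sc[of "numeral n" m] by simp



lemma pderiv_Cc[simp]: "pderiv Cc = 0" by (simp add: Cc_def pderiv_pCons)
lemma pderiv_Xx[simp]: "pderiv Xx = 1" by (simp add: Xx_def pderiv_pCons)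
lemma smult_2: "smult [:2:] (p::M) = 2 * p"
  by (simp add: numeral_poly)

lemma rel_Act: "Act (gen x * gen y - gen y * gen x - brk x y) m = 0"
  by (cases x; cases y; simp only: brk.simps Act_diff Act_mult Act_gen Act_numeral Act_neg rho_smult smult_2 Act_zero;
      simp add: pderiv_mult pderiv_add pderiv_minus pderiv_diff algebra_simps)



lemma rel_Act0: "r \<in> rel_ideal \<Longrightarrow> Act r m = 0"
proof (induction r arbitrary: m rule: rel_ideal.induct)
  case (rel x y) then show ?case by (rule rel_Act)
next
  case zero then show ?case by simp
next
  case (add a b) then show ?case by (simp add: Act_add)
next
  case (mult a u v) then show ?case by (simp add: Act_mult Act_m0)
qed

lemma nU_Act: "z \<in> nU \<Longrightarrow> Act z 1 = 0"
  unfolding nU_def ee_def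
  by (auto simp: Act_add Act_mult Act_gen rel_Act0 Act_m0)

lemma Act_power: "Act (x ^ n) m = (Act x ^^ n) m"
  by (induction n arbitrary: m) (simp_all add: Act_one Act_mult funpow_Suc_right del: funpow.simps)

definition T :: "nat \<Rightarrow> M" where "T b = (Act tt ^^ b) 1"

lemma Act_tt: "Act tt m = smult [:\<i>:] (rho GE m - rho GF m)"
  by (simp add: tt_def ee_def Act_mult Act_sc Act_diff Act_gen Act_neg rho_smult smult_diff_right del: rho.simps)
lemma Act_gen_fun: "Act (gen g) = rho g"
  by (rule ext) (rule Act_gen)

lemma rhoH_const: "(rho GH ^^ a) [:q:] = [:[:0,1:] ^ a * q:]"
  by (induction a) (simp_all add: Cc_def pderiv_pCons)

lemma funpow_Act_smult: "(Act x ^^ b) (smult r m) = smult r ((Act x ^^ b) m)"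
  by (induction b) (simp_all add: Act_msmult)

lemma monom_alt: "monom c a = [:0,1:] ^ a * [:c:]"
  by (simp add: monom_altdef mult.commute)

lemma Act_sum: "Act (sum f S) m = (\<Sum>i\<in>S. Act (f i) m)"
  by (induct S rule: infinite_finite_induct) (simp_all add: Act_add)

lemma Act_ord_map: "Act (ord_map p) 1 = (\<Sum>b\<le>degree p. smult (coeff p b) (T b))"
proof -
  have "Act (sc c * hh ^ a * tt ^ b) 1 = smult ([:0,1:] ^ a * [:c:]) (T b)" for c a b
  proof -
    have "Act (sc c * hh ^ a * tt ^ b) 1 = (Act tt ^^ b) ((rho GH ^^ a) [:[:c:]:])"
      by (simp add: Act_mult Act_power Act_sc hh_def Act_gen_fun del: funpow.simps rho.simps)
    also have "\<dots> = (Act tt ^^ b) (smult ([:0,1:] ^ a * [:c:]) 1)"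
      by (simp add: rhoH_const del: funpow.simps)
    also have "\<dots> = smult ([:0,1:] ^ a * [:c:]) (T b)"
      by (simp only: funpow_Act_smult T_def)
    finally show ?thesis .
  qed
  then have "Act (ord_map p) 1 = (\<Sum>b\<le>degree p. \<Sum>a\<le>degree (coeff p b). smult (monom (coeff (coeff p b) a) a) (T b))"
    by (simp add: ord_map_def Act_sum monom_alt)
  also have "\<dots> = (\<Sum>b\<le>degree p. smult (coeff p b) (T b))"
    by (simp add: smult_sum[symmetric] poly_as_sum_of_monoms)
  finally show ?thesis .
qed



lemma coeff_Xx_0: "coeff (Xx * q) 0 = 0" by (simp add: Xx_def)
lemma coeff_Xx_Suc: "coeff (Xx * q) (Suc k) = coeff q k" by (simp add: Xx_def)
lemma coeff_Cc: "coeff (Cc * q) k = [:0,1:] * coeff q k" by (simp add: Cc_def)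

lemma coeff_Act_tt: "coeff (Act tt m) (Suc k) =
   [:\<i>:] * ([:0,1:] * (of_nat (Suc (Suc k)) * coeff m (Suc (Suc k)))
          + of_nat (Suc k) * (of_nat (Suc (Suc k)) * coeff m (Suc (Suc k))) + coeff m k)"
  by (simp add: Act_tt coeff_Xx_Suc coeff_Cc coeff_pderiv)

lemma coeff_Act_tt0: "coeff (Act tt m) 0 = [:\<i>:] * ([:0,1:] * coeff m 1)"
  by (simp add: Act_tt coeff_Xx_0 coeff_Cc coeff_pderiv)

lemma T_coeff: "(\<forall>n>b. coeff (T b) n = 0) \<and> coeff (T b) b = [:\<i> ^ b:]"
proof (induction b)
  case 0 then show ?case by (simp add: T_def coeff_1)
next
  case (Suc b)
  have TS: "T (Suc b) = Act tt (T b)" by (simp add: T_def)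
  have "coeff (T (Suc b)) n = 0" if "n > Suc b" for n
  proof -
    obtain k where k: "n = Suc k" "k > b" using \<open>n > Suc b\<close> by (cases n) auto
    then show ?thesis using Suc by (simp add: TS coeff_Act_tt)
  qed
  moreover have "coeff (T (Suc b)) (Suc b) = [:\<i> ^ Suc b:]"
    using Suc by (simp add: TS coeff_Act_tt)
  ultimately show ?case by blast
qed

lemma sumT_zero: "(\<Sum>b\<le>N. smult (c b) (T b)) = 0 \<Longrightarrow> \<forall>b\<le>N. c b = 0"
proof (induction N)
  case 0 then show ?case using T_coeff[of 0] by (simp add: T_def)
next
  case (Suc N)
  have "coeff (\<Sum>b\<le>N. smult (c b) (T b)) (Suc N) = 0"
    using T_coeff by (simp add: coeff_sum)
  then have "coeff (\<Sum>b\<le>Suc N. smult (c b) (T b)) (Suc N) = c (Suc N) * [:\<i> ^ Suc N:]"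
    using T_coeff[of "Suc N", THEN conjunct2] by (simp only: sum.atMost_Suc coeff_add coeff_smult) simp
  then have "c (Suc N) * [:\<i> ^ Suc N:] = 0"
    unfolding Suc.prems by simp
  then have c0: "c (Suc N) = 0" by simp
  then have "(\<Sum>b\<le>N. smult (c b) (T b)) = 0" using Suc.prems by simp
  then show ?case using Suc.IH c0 by (auto simp: le_Suc_eq)
qed

lemma Act_ord_map_N: "degree p \<le> N \<Longrightarrow> Act (ord_map p) 1 = (\<Sum>b\<le>N. smult (coeff p b) (T b))"
  unfolding Act_ord_map
  by (rule sum.mono_neutral_left) (auto simp: coeff_eq_0)

lemma ord_map_inj: "Act (ord_map p) 1 = Act (ord_map q) 1 \<Longrightarrow> p = q"
proof -
  assume eq: "Act (ord_map p) 1 = Act (ord_map q) 1"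
  define N where "N = max (degree p) (degree q)"
  have "(\<Sum>b\<le>N. smult (coeff p b - coeff q b) (T b)) = 0"
    using eq Act_ord_map_N[of p N] Act_ord_map_N[of q N]
    by (simp add: N_def smult_diff_left sum_subtractf)
  then have "\<forall>b\<le>N. coeff p b = coeff q b" by (auto dest: sumT_zero)
  then have "coeff p n = coeff q n" for n
    by (cases "n \<le> N") (auto simp: N_def coeff_eq_0)
  then show "p = q" by (rule poly_eqI)
qed

lemma Q_eq:
  assumes p: "z - ord_map p \<in> nU"
  shows "Q z = p"
proof -
  have zp: "Act z 1 = Act (ord_map p) 1"
    using nU_Act[OF p] unfolding Act_diff by (rule right_minus_eq[THEN iffD1])
  have uniq: "q = p" if q: "z - ord_map q \<in> nU" for q
  proof -
    have "Act z 1 = Act (ord_map q) 1"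
      using nU_Act[OF q] unfolding Act_diff by (rule right_minus_eq[THEN iffD1])
    then show "q = p" using zp by (intro ord_map_inj[of q p]) simp
  qed
  show ?thesis unfolding Q_def by (rule the_equality, rule p, rule uniq)
qed



lemma rel_neg: "a \<in> rel_ideal \<Longrightarrow> - a \<in> rel_ideal"
  using rel_ideal.mult[of a "-1" 1] by simp
lemma rel_diff: "a \<in> rel_ideal \<Longrightarrow> b \<in> rel_ideal \<Longrightarrow> a - b \<in> rel_ideal"
  using rel_ideal.add[OF _ rel_neg, of a b] by simp
lemma rel_lmult: "a \<in> rel_ideal \<Longrightarrow> u * a \<in> rel_ideal"
  using rel_ideal.mult[of a u 1] by simp
lemma rel_rmult: "a \<in> rel_ideal \<Longrightarrow> a * v \<in> rel_ideal"
  using rel_ideal.mult[of a 1 v] by simp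
lemma rel_sum: "(\<And>i. i \<in> S \<Longrightarrow> f i \<in> rel_ideal) \<Longrightarrow> sum f S \<in> rel_ideal"
  by (induct S rule: infinite_finite_induct) (auto intro: rel_ideal.zero rel_ideal.add)

lemma nU_I: "r \<in> rel_ideal \<Longrightarrow> ee * u + r \<in> nU"
  unfolding nU_def by blast
lemma nU_E: "a \<in> nU \<Longrightarrow> (\<And>u r. a = ee * u + r \<Longrightarrow> r \<in> rel_ideal \<Longrightarrow> P) \<Longrightarrow> P"
  unfolding nU_def by blast
lemma nU_add: "a \<in> nU \<Longrightarrow> b \<in> nU \<Longrightarrow> a + b \<in> nU"
proof -
  assume "a \<in> nU" "b \<in> nU"
  then obtain u r u' r' where "a = ee * u + r" "r \<in> rel_ideal" "b = ee * u' + r'" "r' \<in> rel_ideal"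
    by (metis nU_E)
  then have "a + b = ee * (u + u') + (r + r')" by (simp add: algebra_simps)
  then show ?thesis using nU_I[OF rel_ideal.add] \<open>r \<in> rel_ideal\<close> \<open>r' \<in> rel_ideal\<close> by simp
qed
lemma nU_rel: "r \<in> rel_ideal \<Longrightarrow> r \<in> nU"
  using nU_I[of r 0] by simp
lemma nU_ee: "ee * u \<in> nU"
  using nU_I[OF rel_ideal.zero, of u] by simp
lemma nU_rmult: "a \<in> nU \<Longrightarrow> a * v \<in> nU"
proof -
  assume "a \<in> nU"
  then obtain u r where "a = ee * u + r" "r \<in> rel_ideal" by (metis nU_E)
  then have "a * v = ee * (u * v) + r * v" by (simp add: algebra_simps)
  then show ?thesis using nU_I[OF rel_rmult[OF \<open>r \<in> rel_ideal\<close>]] by simp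
qed
lemma nU_sc: "a \<in> nU \<Longrightarrow> sc c * a \<in> nU"
proof -
  assume "a \<in> nU"
  then obtain u r where a: "a = ee * u + r" "r \<in> rel_ideal" by (metis nU_E)
  have "sc c * a = ee * (sc c * u) + sc c * r"
  proof -
    have "sc c * (ee * u) = sc c * ee * u" by (rule mult.assoc[symmetric])
    also have "\<dots> = ee * sc c * u" by (simp only: sc_central[of c ee])
    finally show ?thesis by (simp add: a distrib_left mult.assoc)
  qed
  then show ?thesis using nU_I[OF rel_lmult[OF a(2)]] by simp
qed
lemma nU_neg: "a \<in> nU \<Longrightarrow> - a \<in> nU"
  using nU_sc[of a "-1"] by (simp add: sc_minus)
lemma nU_diff: "a \<in> nU \<Longrightarrow> b \<in> nU \<Longrightarrow> a - b \<in> nU"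
  using nU_add[OF _ nU_neg, of a b] by simp
lemma nU_sum: "(\<And>i. i \<in> S \<Longrightarrow> f i \<in> nU) \<Longrightarrow> sum f S \<in> nU"
  by (induct S rule: infinite_finite_induct) (auto intro: nU_add nU_rel rel_ideal.zero)

lemma hh_pow_ee: "hh ^ a * ee \<in> nU"
proof (induction a)
  case 0 then show ?case using nU_ee[of 1] by simp
next
  case (Suc a)
  have r: "hh * ee - ee * hh - 2 * ee \<in> rel_ideal"
    using rel_ideal.rel[of GH GE] by (simp add: hh_def ee_def)
  have "hh ^ a * (hh * ee) = hh ^ a * ee * (hh + 2) + hh ^ a * (hh * ee - ee * hh - 2 * ee)"
    by (simp add: distrib_left distrib_right mult_2 mult_2_right mult.assoc right_diff_distrib)
  then have "hh ^ Suc a * ee = hh ^ a * ee * (hh + 2) + hh ^ a * (hh * ee - ee * hh - 2 * ee)"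
    by (simp only: power_Suc2 mult.assoc)
  then show ?case using nU_add[OF nU_rmult[OF Suc] nU_rel[OF rel_lmult[OF r]]] by simp
qed



definition H :: "complex poly \<Rightarrow> FA" where
  "H q = (\<Sum>a\<le>degree q. sc (coeff q a) * hh ^ a)"

lemma H_N: "degree q \<le> N \<Longrightarrow> H q = (\<Sum>a\<le>N. sc (coeff q a) * hh ^ a)"
  unfolding H_def by (rule sum.mono_neutral_left) (auto simp: coeff_eq_0)

lemma H_add: "H (q + r) = H q + H r"
proof -
  define N where "N = max (degree q) (degree r)"
  have "degree (q + r) \<le> N" unfolding N_def by (rule degree_add_le_max)
  then show ?thesis
    by (simp add: H_N[of _ N] N_def sc_add distrib_right sum.distrib)
qed

lemma H_smult: "H (smult c q) = sc c * H q"
  by (simp add: H_N[of "smult c q" "degree q"] H_def sum_distrib_left sc_mult mult.assoc)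

lemma H_0[simp]: "H 0 = 0" by (simp add: H_def)
lemma H_neg: "H (- q) = - H q"
  using H_add[of q "-q"] by (simp add: add_eq_0_iff)
lemma H_diff: "H (q - r) = H q - H r"
  using H_add[of q "-r"] by (simp add: H_neg)
lemma H_1: "H 1 = 1" by (simp add: H_def)

lemma H_X: "H (q * [:0,1:]) = H q * hh"
proof -
  have e: "q * [:0,1:] = pCons 0 q" by (simp add: mult.commute)
  have "H (pCons 0 q) = (\<Sum>a\<le>Suc (degree q). sc (coeff (pCons 0 q) a) * hh ^ a)"
    by (rule H_N) (simp add: degree_pCons_le)
  also have "\<dots> = (\<Sum>a\<le>degree q. sc (coeff q a) * hh ^ a) * hh"
    by (simp add: sum.atMost_Suc_shift sum_distrib_right power_Suc2 mult.assoc power_commutes del: sum.atMost_Suc)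
  finally show ?thesis by (simp add: e H_def)
qed

lemma H_ee: "H q * ee \<in> nU"
  unfolding H_def sum_distrib_right
  by (rule nU_sum) (simp add: mult.assoc nU_sc hh_pow_ee)

lemma ord_map_H: "ord_map p = (\<Sum>b\<le>degree p. H (coeff p b) * tt ^ b)"
  unfolding ord_map_def H_def sum_distrib_right ..

lemma OM_N: "degree p \<le> N \<Longrightarrow> ord_map p = (\<Sum>b\<le>N. H (coeff p b) * tt ^ b)"
  unfolding ord_map_H by (rule sum.mono_neutral_left) (auto simp: coeff_eq_0)

lemma OM_add: "ord_map (p + q) = ord_map p + ord_map q"
proof -
  define N where "N = max (degree p) (degree q)"
  have "degree (p + q) \<le> N" unfolding N_def by (rule degree_add_le_max)
  then show ?thesis
    by (simp add: OM_N[of _ N] N_def H_add distrib_right sum.distrib)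
qed

lemma OM_smult: "ord_map (smult [:c:] p) = sc c * ord_map p"
proof -
  have "coeff (smult [:c:] p) b = smult c (coeff p b)" for b by simp
  then show ?thesis
    by (simp add: OM_N[of "smult [:c:] p" "degree p"] ord_map_H sum_distrib_left H_smult mult.assoc
        del: coeff_smult)
qed

lemma OM_0[simp]: "ord_map 0 = 0" by (simp add: ord_map_H)
lemma OM_neg: "ord_map (- p) = - ord_map p"
  using OM_add[of p "-p"] by (simp add: add_eq_0_iff)
lemma OM_diff: "ord_map (p - q) = ord_map p - ord_map q"
  using OM_add[of p "-q"] by (simp add: OM_neg)

lemma OM_pCons: "ord_map (pCons q p) = H q + ord_map p * tt"
proof -
  have "ord_map (pCons q p) = (\<Sum>b\<le>Suc (degree p). H (coeff (pCons q p) b) * tt ^ b)"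
    by (rule OM_N) (simp add: degree_pCons_le)
  also have "\<dots> = H q + (\<Sum>b\<le>degree p. H (coeff p b) * tt ^ b) * tt"
    by (simp add: sum.atMost_Suc_shift sum_distrib_right power_Suc2 mult.assoc power_commutes del: sum.atMost_Suc)
  finally show ?thesis by (simp add: ord_map_H)
qed

lemma OM_1: "ord_map 1 = 1"
  using OM_pCons[of 1 0] by (simp add: H_1 pCons_one)



definition R :: "gen \<Rightarrow> gen \<Rightarrow> FA" where
  "R x y = gen x * gen y - gen y * gen x - brk x y"

lemma R_rel: "R x y \<in> rel_ideal" unfolding R_def by (rule rel_ideal.rel)

lemma two_FA: "(2::FA) = Poly_Mapping.single 0 2" by simp

lemma idZ: "tt * ZZ - ZZ * (tt - 2) = sc \<i> * R GE GH - sc \<i> * R GF GH - 2 * R GE GF"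
  apply (simp only: R_def brk.simps tt_def ZZ_def yy_def hh_def ee_def theta.simps two_FA)
  apply (simp only: gen_def sc_def algebra_simps mult_single single_uminus[symmetric] single_add[symmetric] single_diff[symmetric])
  apply (rule poly_mapping_eqI)
  apply (simp add: lookup_add lookup_minus lookup_single when_def zero_fword_def)
  done

lemma idZbar: "tt * Zbar - Zbar * (tt + 2) = sc \<i> * R GE GH - sc \<i> * R GF GH + 2 * R GE GF"
  apply (simp only: R_def brk.simps tt_def Zbar_def yy_def hh_def ee_def theta.simps two_FA)
  apply (simp only: gen_def sc_def algebra_simps mult_single single_uminus[symmetric] single_add[symmetric] single_diff[symmetric])
  apply (rule poly_mapping_eqI)
  apply (simp add: lookup_add lookup_minus lookup_single when_def zero_fword_def)
  done

lemma decZ: "ZZ = hh - sc 1 * tt + sc (2 * \<i>) * ee"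
  apply (simp only: tt_def ZZ_def yy_def hh_def ee_def theta.simps)
  apply (simp only: gen_def sc_def algebra_simps mult_single single_uminus[symmetric] single_add[symmetric] single_diff[symmetric])
  apply (rule poly_mapping_eqI)
  apply (simp add: lookup_add lookup_minus lookup_single when_def zero_fword_def)
  done

lemma decZbar: "Zbar = hh - sc (-1) * tt + sc (-2 * \<i>) * ee"
  apply (simp only: tt_def Zbar_def yy_def hh_def ee_def theta.simps)
  apply (simp only: gen_def sc_def algebra_simps mult_single single_uminus[symmetric] single_add[symmetric] single_diff[symmetric])
  apply (rule poly_mapping_eqI)
  apply (simp add: lookup_add lookup_minus lookup_single when_def zero_fword_def)
  done

lemma relZ: "tt * ZZ - ZZ * (tt - sc (2 * 1)) \<in> rel_ideal"
proof -
  have "tt * ZZ - ZZ * (tt - sc (2 * 1)) = sc \<i> * R GE GH - sc \<i> * R GF GH - 2 * R GE GF"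
    using idZ by simp
  then show ?thesis by (simp add: rel_diff rel_lmult R_rel)
qed

lemma relZbar: "tt * Zbar - Zbar * (tt - sc (2 * - 1)) \<in> rel_ideal"
proof -
  have "tt * Zbar - Zbar * (tt - sc (2 * - 1)) = sc \<i> * R GE GH - sc \<i> * R GF GH + 2 * R GE GF"
    using idZbar by (simp add: sc_minus)
  then show ?thesis by (simp add: rel_diff rel_lmult R_rel rel_ideal.add)
qed



definition RR :: "complex \<Rightarrow> complex poly poly \<Rightarrow> complex poly poly" where
  "RR \<sigma> P = [:[:0,1:], [:-\<sigma>:]:] * pcompose P [:[:-2*\<sigma>:], 1:]"

lemma RR_pCons: "RR \<sigma> (pCons q P) =
   pCons (q * [:0,1:]) (pCons (smult (-\<sigma>) q) 0) + (pCons 0 (RR \<sigma> P) + smult [:-2*\<sigma>:] (RR \<sigma> P))"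
  by (simp add: RR_def pcompose_pCons algebra_simps)

lemma RR_0: "RR \<sigma> 0 = 0" by (simp add: RR_def)

lemma H_pCons0: "H (pCons 0 q) = H q * hh"
  using H_X[of q] by (simp add: mult.commute)

lemma OM_RR_pCons: "ord_map (RR \<sigma> (pCons q P)) =
   H q * hh - sc \<sigma> * H q * tt + ord_map (RR \<sigma> P) * tt + sc (-2*\<sigma>) * ord_map (RR \<sigma> P)"
  by (simp add: RR_pCons OM_add OM_pCons OM_smult H_pCons0 H_neg H_smult sc_minus mult.assoc)

lemma right_action:
  assumes c: "tt * W - W * (tt - sc (2*\<sigma>)) \<in> rel_ideal"
    and d: "W = hh - sc \<sigma> * tt + sc \<mu> * ee"
  shows "ord_map P * W - ord_map (RR \<sigma> P) \<in> nU"
proof (induction P)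
  case 0 then show ?case by (simp add: RR_0 nU_rel rel_ideal.zero)
next
  case (pCons q P)
  define Hq where "Hq = H q"
  define O1 where "O1 = ord_map P"
  define O2 where "O2 = ord_map (RR \<sigma> P)"
  have c1: "Hq * (sc \<sigma> * x) = sc \<sigma> * (Hq * x)" for x
    by (simp only: mult.assoc[symmetric] sc_central[of \<sigma> Hq, symmetric])
  have c2: "Hq * (sc \<mu> * x) = sc \<mu> * (Hq * x)" for x
    by (simp only: mult.assoc[symmetric] sc_central[of \<mu> Hq, symmetric])
  have c3: "O2 * sc c = sc c * O2" for c
    by (rule sc_central[symmetric])
  have eq: "(Hq + O1 * tt) * W - (Hq * hh - sc \<sigma> * Hq * tt + O2 * tt + sc (-2*\<sigma>) * O2)
     = sc \<mu> * (Hq * ee) + O1 * (tt * W - W * (tt - sc (2*\<sigma>))) + (O1 * W - O2) * (tt - sc (2*\<sigma>))"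
    unfolding d by (simp add: algebra_simps c1 c2 c3 sc_minus)
  have "sc \<mu> * (Hq * ee) + O1 * (tt * W - W * (tt - sc (2*\<sigma>))) + (O1 * W - O2) * (tt - sc (2*\<sigma>)) \<in> nU"
    unfolding Hq_def O1_def O2_def
    by (rule nU_add[OF nU_add[OF nU_sc[OF H_ee] nU_rel[OF rel_lmult[OF c]]] nU_rmult[OF pCons.IH]])
  then show ?case
    using eq by (simp add: OM_RR_pCons OM_pCons Hq_def O1_def O2_def)
qed



lemma fZ_shift: "pcompose [:[:of_nat (2 * j) :: complex, 1:], - 1:] [:[:-2 * 1:], 1:]
     = [:[:of_nat (2 * Suc j), 1:], - 1:]"
  by (simp add: pcompose_pCons algebra_simps)

lemma fB_shift: "pcompose [:[:of_nat (2 * j) :: complex, 1:], 1:] [:[:-2 * - 1:], 1:]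
     = [:[:of_nat (2 * Suc j), 1:], 1:]"
  by (simp add: pcompose_pCons algebra_simps)

lemma smult_cm1: "smult [:-1:] (p::M) = - p"
proof -
  have "[:-1:] = -(1::complex poly)" by (simp add: one_pCons)
  then show ?thesis by simp
qed

lemma RR_PZ: "RR 1 (\<Prod>j<l. [: [: of_nat (2 * j), 1 :], - 1 :]) = (\<Prod>j<Suc l. [: [: of_nat (2 * j), 1 :], - 1 :])"
  unfolding RR_def pcompose_prod fZ_shift prod.lessThan_Suc_shift
  by (simp add: smult_cm1)

lemma RR_PB: "RR (-1) (\<Prod>j<l. [: [: of_nat (2 * j), 1 :], 1 :]) = (\<Prod>j<Suc l. [: [: of_nat (2 * j), 1 :], 1 :])"
  unfolding RR_def pcompose_prod fB_shift prod.lessThan_Suc_shift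
  by simp

lemma powZ: "ZZ ^ l - ord_map (\<Prod>j<l. [: [: of_nat (2 * j), 1 :], - 1 :]) \<in> nU"
proof (induction l)
  case 0 then show ?case by (simp add: OM_1 nU_rel rel_ideal.zero)
next
  case (Suc l)
  let ?P = "\<Prod>j<l. [: [: of_nat (2 * j), 1 :], - 1 :]"
  have B: "ZZ ^ Suc l - ord_map (RR 1 ?P) = (ZZ ^ l - ord_map ?P) * ZZ + (ord_map ?P * ZZ - ord_map (RR 1 ?P))"
    by (simp add: power_Suc2 algebra_simps power_commutes)
  have "ZZ ^ Suc l - ord_map (RR 1 ?P) \<in> nU"
    unfolding B by (rule nU_add[OF nU_rmult[OF Suc.IH] right_action[OF relZ decZ]])
  then show ?case by (simp only: RR_PZ)
qed

lemma powZbar: "Zbar ^ l - ord_map (\<Prod>j<l. [: [: of_nat (2 * j), 1 :], 1 :]) \<in> nU"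
proof (induction l)
  case 0 then show ?case by (simp add: OM_1 nU_rel rel_ideal.zero)
next
  case (Suc l)
  let ?P = "\<Prod>j<l. [: [: of_nat (2 * j), 1 :], 1 :]"
  have B: "Zbar ^ Suc l - ord_map (RR (-1) ?P) = (Zbar ^ l - ord_map ?P) * Zbar + (ord_map ?P * Zbar - ord_map (RR (-1) ?P))"
    by (simp add: power_Suc2 algebra_simps power_commutes)
  have "Zbar ^ Suc l - ord_map (RR (-1) ?P) \<in> nU"
    unfolding B by (rule nU_add[OF nU_rmult[OF Suc.IH] right_action[OF relZbar decZbar]])
  then show ?case by (simp only: RR_PB)
qed

theorem theorem6p3:
  fixes l :: nat
  assumes "l \<ge> 1"
  shows "Q (ZZ ^ l) = (\<Prod>j<l. [: [: of_nat (2 * j), 1 :], - 1 :])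
       \<and> Q (Zbar ^ l) = (\<Prod>j<l. [: [: of_nat (2 * j), 1 :], 1 :])"
  using Q_eq[OF powZ] Q_eq[OF powZbar] by blast


end
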